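(* Consider the two-agent zero-sum dynamic game with $K$ stages, dynamics constraints, and control bound constraints $a^i_t\le u^i_t\le b^i_t$ described in the context. Let $(x^*_{1:K+1},u^{1*}_{1:K},u^{2*}_{1:K})$ be the states and controls of a local OLNE at which strict complementarity holds, with multipliers $\lambda^i_t,\underline\nu^i_t,\bar\nu^i_t$ satisfying (COL1)–(COL6), and let $\pi^i_t$ be differentiable feedback policies with $\pi^i_t(x^*_t)=u^{i*}_t$ satisfying the standing policy assumption. Then for every $t\in[K]$ and $i$, the trajectory satisfies the feedback first-order conditions (CFB1)–(CFB7) with multipliers $\lambda^i_s,\underline\nu^i_s,\bar\nu^i_s$ ($s\in T_t$) and $\psi^i_s=\bar\nu^{-i}_s-\underline\nu^{-i}_s$ ($s\in T_{t+1}$); i.e., it satisfies the first-order necessary conditions for a local FBNE.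
   Context: Two-agent zero-sum discrete-time dynamic game with horizon $K\in\mathbb N$. States $x_t\in\mathbb R^n$, known initial state $x_1$; controls $u^i_t\in\mathbb R^{m_i}$, $i\in\{1,2\}$, subject to componentwise bounds $a^i_t\le u^i_t\le b^i_t$. Dynamics $x_{t+1}=f_t(x_t,u^1_t,u^2_t)$, $f_t$ smooth. Agent 1 has stage costs $\ell_t(x_t,u^1_t,u^2_t)$ and terminal cost $\ell_{K+1}(x_{K+1})$; $\ell^1_t=\ell_t$, $\ell^2_t=-\ell_t$, sufficiently smooth. For agent $i$, $-i$ is the other agent; reordered arguments $\ell^i_t(x_t,u^i_t,u^{-i}_t)$, $f_t(x_t,u^i_t,u^{-i}_t)$. $T_t:=\{t,\dots,K\}$. $\perp$ denotes componentwise complementarity. $J=\sum_t\ell_t+\ell_{K+1}$ along the unrolled trajectory; a local OLNE is a feasible pair of control sequences such that neither agent can decrease its cost ($J$ for agent 1, $-J$ for agent 2) by a feasible unilateral change within a neighborhood. Open-loop first-order conditions: for each $i$ there exist $\lambda^i_t,\underline\nu^i_t,\bar\nu^i_t$ ($t\in[K]$) with (COL1) $\nabla_{x_t}\ell^i_t+(\nabla_{x_t}f_t)^\top\lambda^i_t-\lambda^i_{t-1}=0$, $t=2,\dots,K$; (COL2) $\nabla_{u^i_t}\ell^i_t+(\nabla_{u^i_t}f_t)^\top\lambda^i_t-\underline\nu^i_t+\bar\nu^i_t=0$, $t\in[K]$; (COL3) $\nabla_{x_{K+1}}\ell^i_{K+1}-\lambda^i_K=0$; (COL4) dynamics hold;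 (COL5) $a^i_t\le u^i_t\perp\underline\nu^i_t\ge0$; (COL6) $0\le\bar\nu^i_t\perp u^i_t\le b^i_t$. Feedback first-order conditions for agent $i$ at time $t$ (KKT of minimizing $\sum_{s=t}^K\ell^i_s+\ell^i_{K+1}$ over $u^i_{t:K},u^{-i}_{t+1:K},x_{t+1:K+1}$ s.t. dynamics ($s\in T_t$), $u^{-i}_s=\pi^{-i}_s(x_s)$ ($s\in T_{t+1}$), $a^i_s\le u^i_s\le b^i_s$ ($s\in T_t$)): there exist $\lambda^i_s,\underline\nu^i_s,\bar\nu^i_s$ ($s\in T_t$), $\psi^i_s$ ($s\in T_{t+1}$) with (CFB1) $\nabla_{u^{-i}_s}\ell^i_s+(\nabla_{u^{-i}_s}f_s)^\top\lambda^i_s-\psi^i_s=0$, $s\in T_{t+1}$; (CFB2) $\nabla_{u^i_s}\ell^i_s+(\nabla_{u^i_s}f_s)^\top\lambda^i_s-\underline\nu^i_s+\bar\nu^i_s=0$, $s\in T_t$; (CFB3) $\nabla_{x_{K+1}}\ell^i_{K+1}-\lambda^i_K=0$; (CFB4) dynamics for $s\in T_t$; (CFB5) $u^{-i}_s=\pi^{-i}_s(x_s)$, $s\in T_{t+1}$; (CFB6) $a^i_s\le u^i_s\perp\underline\nu^i_s\ge0$, $0\le\bar\nu^i_s\perp u^i_s\le b^i_s$, $s\in T_t$; (CFB7) $\nabla_{x_s}\ell^i_s-\lambda^i_{s-1}+(\nabla_{x_s}f_s)^\top\lambda^i_s+(\nabla_{x_s}\pi^{-i}_s)^\top\psi^i_s=0$,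 $s\in T_{t+1}$. Strict complementarity: for every component $j$, exactly one of $[u^i_s]_j-[a^i_s]_j$ and $[\underline\nu^i_s]_j$ is zero, and exactly one of $[b^i_s]_j-[u^i_s]_j$ and $[\bar\nu^i_s]_j$ is zero. Standing policy assumption (taken as a consequence of strict complementarity): whenever a bound on $[u^i_s]_j$ is active, the $j$-th row of $\nabla_{x_s}\pi^i_s(x_s)$ is zero. *)

theory Defs
  imports "HOL-Analysis.Analysis"
begin

text \<open>Transposed Jacobian times a vector: (\<nabla>g(z))^T y, via the adjoint of the
  Frechet derivative. For scalar g, the gradient is the transposed Jacobian applied to 1.\<close>
definition jacT :: "('a::euclidean_space \<Rightarrow> 'b::euclidean_space) \<Rightarrow> 'a \<Rightarrow> 'b \<Rightarrow> 'a" where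
  "jacT g z y = adjoint (frechet_derivative g (at z)) y"

definition grad :: "('a::euclidean_space \<Rightarrow> real) \<Rightarrow> 'a \<Rightarrow> 'a" where
  "grad g z = jacT g z 1"

text \<open>Unrolled state trajectory; index 0 is unused, x_1 = x1.\<close>
fun traj :: "(nat \<Rightarrow> 'x \<Rightarrow> 'u \<Rightarrow> 'v \<Rightarrow> 'x) \<Rightarrow> 'x \<Rightarrow> (nat \<Rightarrow> 'u) \<Rightarrow> (nat \<Rightarrow> 'v) \<Rightarrow> nat \<Rightarrow> 'x" where
  "traj f x1 u v 0 = x1"
| "traj f x1 u v (Suc 0) = x1"
| "traj f x1 u v (Suc (Suc t)) = f (Suc t) (traj f x1 u v (Suc t)) (u (Suc t)) (v (Suc t))"

definition Jcost :: "nat \<Rightarrow> (nat \<Rightarrow> 'x \<Rightarrow> 'u \<Rightarrow> 'v \<Rightarrow> 'x) \<Rightarrow> (nat \<Rightarrow> 'x \<Rightarrow> 'u \<Rightarrow> 'v \<Rightarrow> real)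
    \<Rightarrow> ('x \<Rightarrow> real) \<Rightarrow> 'x \<Rightarrow> (nat \<Rightarrow> 'u) \<Rightarrow> (nat \<Rightarrow> 'v) \<Rightarrow> real" where
  "Jcost K f l lT x1 u v =
     (\<Sum>t=1..K. l t (traj f x1 u v t) (u t) (v t)) + lT (traj f x1 u v (K+1))"

definition feasible :: "nat \<Rightarrow> (nat \<Rightarrow> real^'m) \<Rightarrow> (nat \<Rightarrow> real^'m) \<Rightarrow> (nat \<Rightarrow> real^'m) \<Rightarrow> bool" where
  "feasible K a b u \<longleftrightarrow> (\<forall>t\<in>{1..K}. \<forall>j. a t $ j \<le> u t $ j \<and> u t $ j \<le> b t $ j)"

definition local_OLNE ::
  "nat \<Rightarrow> (nat \<Rightarrow> 'x \<Rightarrow> real^'m1 \<Rightarrow> real^'m2 \<Rightarrow> 'x) \<Rightarrow> (nat \<Rightarrow> 'x \<Rightarrow> real^'m1 \<Rightarrow> real^'m2 \<Rightarrow> real)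
   \<Rightarrow> ('x \<Rightarrow> real) \<Rightarrow> 'x \<Rightarrow> (nat \<Rightarrow> real^'m1) \<Rightarrow> (nat \<Rightarrow> real^'m1) \<Rightarrow> (nat \<Rightarrow> real^'m2) \<Rightarrow> (nat \<Rightarrow> real^'m2)
   \<Rightarrow> (nat \<Rightarrow> real^'m1) \<Rightarrow> (nat \<Rightarrow> real^'m2) \<Rightarrow> bool" where
  "local_OLNE K f l lT x1 a1 b1 a2 b2 u1 u2 \<longleftrightarrow>
     feasible K a1 b1 u1 \<and> feasible K a2 b2 u2 \<and>
     (\<exists>\<epsilon>>0.
        (\<forall>w. feasible K a1 b1 w \<and> (\<forall>t\<in>{1..K}. dist (w t) (u1 t) < \<epsilon>)
              \<longrightarrow> Jcost K f l lT x1 u1 u2 \<le> Jcost K f l lT x1 w u2) \<and>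
        (\<forall>w. feasible K a2 b2 w \<and> (\<forall>t\<in>{1..K}. dist (w t) (u2 t) < \<epsilon>)
              \<longrightarrow> - Jcost K f l lT x1 u1 u2 \<le> - Jcost K f l lT x1 u1 w))"

definition compl_lower :: "real^'m \<Rightarrow> real^'m \<Rightarrow> real^'m \<Rightarrow> bool" where
  "compl_lower a u \<nu> \<longleftrightarrow> (\<forall>j. a $ j \<le> u $ j \<and> 0 \<le> \<nu> $ j \<and> (u $ j - a $ j) * \<nu> $ j = 0)"

definition compl_upper :: "real^'m \<Rightarrow> real^'m \<Rightarrow> real^'m \<Rightarrow> bool" where
  "compl_upper b u \<nu> \<longleftrightarrow> (\<forall>j. u $ j \<le> b $ j \<and> 0 \<le> \<nu> $ j \<and> (b $ j - u $ j) * \<nu> $ j = 0)"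

text \<open>Open-loop first-order conditions (COL1)-(COL6) for an agent written in
  (own control, other control) form: L = \<ell>^i, F = f with reordered arguments.\<close>
definition OL_FOC ::
  "nat \<Rightarrow> (nat \<Rightarrow> 'x::euclidean_space \<Rightarrow> real^'mo \<Rightarrow> 'uq \<Rightarrow> real) \<Rightarrow> ('x \<Rightarrow> real)
   \<Rightarrow> (nat \<Rightarrow> 'x \<Rightarrow> real^'mo \<Rightarrow> 'uq \<Rightarrow> 'x) \<Rightarrow> (nat \<Rightarrow> real^'mo) \<Rightarrow> (nat \<Rightarrow> real^'mo)
   \<Rightarrow> (nat \<Rightarrow> 'x) \<Rightarrow> (nat \<Rightarrow> real^'mo) \<Rightarrow> (nat \<Rightarrow> 'uq)
   \<Rightarrow> (nat \<Rightarrow> 'x) \<Rightarrow> (nat \<Rightarrow> real^'mo) \<Rightarrow> (nat \<Rightarrow> real^'mo) \<Rightarrow> bool" where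
  "OL_FOC K L Lfin F a b xs uo uq lam nl nu \<longleftrightarrow>
     (\<forall>t\<in>{2..K}. grad (\<lambda>x. L t x (uo t) (uq t)) (xs t)
                 + jacT (\<lambda>x. F t x (uo t) (uq t)) (xs t) (lam t) - lam (t-1) = 0) \<and>
     (\<forall>t\<in>{1..K}. grad (\<lambda>u. L t (xs t) u (uq t)) (uo t)
                 + jacT (\<lambda>u. F t (xs t) u (uq t)) (uo t) (lam t) - nl t + nu t = 0) \<and>
     grad Lfin (xs (K+1)) - lam K = 0 \<and>
     (\<forall>t\<in>{1..K}. xs (t+1) = F t (xs t) (uo t) (uq t)) \<and>
     (\<forall>t\<in>{1..K}. compl_lower (a t) (uo t) (nl t)) \<and>
     (\<forall>t\<in>{1..K}. compl_upper (b t) (uo t) (nu t))"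

text \<open>Feedback first-order conditions (CFB1)-(CFB7) for an agent at time t,
  with the given multipliers; piq is the other agent's feedback policy.\<close>
definition FB_FOC ::
  "nat \<Rightarrow> nat \<Rightarrow> (nat \<Rightarrow> 'x::euclidean_space \<Rightarrow> real^'mo \<Rightarrow> real^'mq \<Rightarrow> real) \<Rightarrow> ('x \<Rightarrow> real)
   \<Rightarrow> (nat \<Rightarrow> 'x \<Rightarrow> real^'mo \<Rightarrow> real^'mq \<Rightarrow> 'x) \<Rightarrow> (nat \<Rightarrow> real^'mo) \<Rightarrow> (nat \<Rightarrow> real^'mo)
   \<Rightarrow> (nat \<Rightarrow> 'x \<Rightarrow> real^'mq)
   \<Rightarrow> (nat \<Rightarrow> 'x) \<Rightarrow> (nat \<Rightarrow> real^'mo) \<Rightarrow> (nat \<Rightarrow> real^'mq)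
   \<Rightarrow> (nat \<Rightarrow> 'x) \<Rightarrow> (nat \<Rightarrow> real^'mo) \<Rightarrow> (nat \<Rightarrow> real^'mo) \<Rightarrow> (nat \<Rightarrow> real^'mq) \<Rightarrow> bool" where
  "FB_FOC K t L Lfin F a b piq xs uo uq lam nl nu psi \<longleftrightarrow>
     (\<forall>s\<in>{t+1..K}. grad (\<lambda>v. L s (xs s) (uo s) v) (uq s)
                    + jacT (\<lambda>v. F s (xs s) (uo s) v) (uq s) (lam s) - psi s = 0) \<and>
     (\<forall>s\<in>{t..K}. grad (\<lambda>u. L s (xs s) u (uq s)) (uo s)
                  + jacT (\<lambda>u. F s (xs s) u (uq s)) (uo s) (lam s) - nl s + nu s = 0) \<and>
     grad Lfin (xs (K+1)) - lam K = 0 \<and>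
     (\<forall>s\<in>{t..K}. xs (s+1) = F s (xs s) (uo s) (uq s)) \<and>
     (\<forall>s\<in>{t+1..K}. uq s = piq s (xs s)) \<and>
     (\<forall>s\<in>{t..K}. compl_lower (a s) (uo s) (nl s) \<and> compl_upper (b s) (uo s) (nu s)) \<and>
     (\<forall>s\<in>{t+1..K}. grad (\<lambda>x. L s x (uo s) (uq s)) (xs s) - lam (s-1)
                    + jacT (\<lambda>x. F s x (uo s) (uq s)) (xs s) (lam s)
                    + jacT (piq s) (xs s) (psi s) = 0)"

definition strict_compl :: "nat \<Rightarrow> (nat \<Rightarrow> real^'m) \<Rightarrow> (nat \<Rightarrow> real^'m) \<Rightarrow> (nat \<Rightarrow> real^'m)
   \<Rightarrow> (nat \<Rightarrow> real^'m) \<Rightarrow> (nat \<Rightarrow> real^'m) \<Rightarrow> bool" where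
  "strict_compl K a b u nl nu \<longleftrightarrow>
     (\<forall>s\<in>{1..K}. \<forall>j. ((u s $ j - a s $ j = 0) \<noteq> (nl s $ j = 0)) \<and>
                     ((b s $ j - u s $ j = 0) \<noteq> (nu s $ j = 0)))"

definition policy_assm :: "nat \<Rightarrow> (nat \<Rightarrow> 'x::euclidean_space \<Rightarrow> real^'m) \<Rightarrow> (nat \<Rightarrow> 'x)
   \<Rightarrow> (nat \<Rightarrow> real^'m) \<Rightarrow> (nat \<Rightarrow> real^'m) \<Rightarrow> (nat \<Rightarrow> real^'m) \<Rightarrow> bool" where
  "policy_assm K pol xs u a b \<longleftrightarrow>
     (\<forall>s\<in>{1..K}. \<forall>j. (u s $ j = a s $ j \<or> u s $ j = b s $ j)
        \<longrightarrow> (\<forall>h. frechet_derivative (pol s) (at (xs s)) h $ j = 0))"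

end

theory Submission imports Defs begin

lemma lin_fd: "g differentiable (at z) \<Longrightarrow> linear (frechet_derivative g (at z))"
  by (simp add: frechet_derivative_works has_derivative_linear)

lemma jacT_neg: "g differentiable (at z) \<Longrightarrow> jacT g z (- y) = - jacT g z y"
  unfolding jacT_def using adjoint_linear[OF lin_fd] linear_neg by blast

lemma grad_neg:
  fixes g :: "'a::euclidean_space \<Rightarrow> real"
  assumes "g differentiable (at z)"
  shows "grad (\<lambda>x. - g x) z = - grad g z"
proof -
  let ?D = "frechet_derivative g (at z)"
  have d: "(g has_derivative ?D) (at z)" using assms frechet_derivative_works by blast
  have "((\<lambda>x. - g x) has_derivative (\<lambda>h. - ?D h)) (at z)" using has_derivative_minus[OF d] .
  hence e: "frechet_derivative (\<lambda>x. - g x) (at z) = (\<lambda>h. - ?D h)" by (rule frechet_derivative_at[symmetric])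
  have l: "linear ?D" using lin_fd[OF assms] .
  have "adjoint (\<lambda>h. - ?D h) = (\<lambda>y. - adjoint ?D y)"
    by (rule adjoint_unique) (simp add: adjoint_clauses[OF l])
  thus ?thesis unfolding grad_def jacT_def e by simp
qed

lemma diff_x: assumes "\<And>x u v. (\<lambda>(x, u, v). F x u v) differentiable (at (x, u, v))"
  shows "(\<lambda>x. F x u v) differentiable (at x)"
proof -
  have "(\<lambda>x. F x u v) = (\<lambda>(x, u, v). F x u v) \<circ> (\<lambda>x. (x, u, v))" by auto
  moreover have True ..
    have "((\<lambda>x. (x, u, v)) has_derivative (\<lambda>h. (h, 0, 0))) (at x)"
      by (intro has_derivative_Pair has_derivative_ident has_derivative_const)
    hence "(\<lambda>x. (x, u, v)) differentiable (at x)" unfolding differentiable_def by blast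
  ultimately show ?thesis using differentiable_chain_at assms by metis
qed

lemma diff_u: assumes "\<And>x u v. (\<lambda>(x, u, v). F x u v) differentiable (at (x, u, v))"
  shows "(\<lambda>u. F x u v) differentiable (at u)"
proof -
  have "(\<lambda>u. F x u v) = (\<lambda>(x, u, v). F x u v) \<circ> (\<lambda>u. (x, u, v))" by auto
  moreover have True ..
    have "((\<lambda>u. (x, u, v)) has_derivative (\<lambda>h. (0, h, 0))) (at u)"
      by (intro has_derivative_Pair has_derivative_ident has_derivative_const)
    hence "(\<lambda>u. (x, u, v)) differentiable (at u)" unfolding differentiable_def by blast
  ultimately show ?thesis using differentiable_chain_at assms by metis
qed

lemma diff_v: assumes "\<And>x u v. (\<lambda>(x, u, v). F x u v) differentiable (at (x, u, v))"
  shows "(\<lambda>v. F x u v) differentiable (at v)"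
proof -
  have "(\<lambda>v. F x u v) = (\<lambda>(x, u, v). F x u v) \<circ> (\<lambda>v. (x, u, v))" by auto
  moreover have True ..
    have "((\<lambda>v. (x, u, v)) has_derivative (\<lambda>h. (0, 0, h))) (at v)"
      by (intro has_derivative_Pair has_derivative_ident has_derivative_const)
    hence "(\<lambda>v. (x, u, v)) differentiable (at v)" unfolding differentiable_def by blast
  ultimately show ?thesis using differentiable_chain_at assms by metis
qed

lemma jacT_pol_zero:
  fixes p :: "'a::euclidean_space \<Rightarrow> real^'m" and y :: "real^'m"
  assumes "p differentiable (at z)"
    and "\<And>j. y $ j \<noteq> 0 \<Longrightarrow> (\<forall>h. frechet_derivative p (at z) h $ j = 0)"
  shows "jacT p z y = 0"
proof -
  let ?D = "frechet_derivative p (at z)"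
  have l: "linear ?D" using lin_fd[OF assms(1)] .
  have "\<And>h. adjoint ?D y \<bullet> h = 0"
  proof -
    fix h
    have "adjoint ?D y \<bullet> h = y \<bullet> ?D h" by (simp add: adjoint_clauses[OF l])
    also have "\<dots> = (\<Sum>j\<in>UNIV. y $ j * ?D h $ j)" by (simp add: inner_vec_def)
    also have "\<dots> = 0" by (rule sum.neutral) (use assms(2) in fastforce)
    finally show "adjoint ?D y \<bullet> h = 0" .
  qed
  from this[of "adjoint ?D y"] show ?thesis unfolding jacT_def by simp
qed

theorem theorem2:
  fixes K :: nat
    and f :: "nat \<Rightarrow> real^'n \<Rightarrow> real^'m1 \<Rightarrow> real^'m2 \<Rightarrow> real^'n"
    and l :: "nat \<Rightarrow> real^'n \<Rightarrow> real^'m1 \<Rightarrow> real^'m2 \<Rightarrow> real"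
    and lT :: "real^'n \<Rightarrow> real"
    and a1 b1 u1 :: "nat \<Rightarrow> real^'m1"
    and a2 b2 u2 :: "nat \<Rightarrow> real^'m2"
    and xs lam1 lam2 :: "nat \<Rightarrow> real^'n"
    and nl1 nu1 :: "nat \<Rightarrow> real^'m1"
    and nl2 nu2 :: "nat \<Rightarrow> real^'m2"
    and pi1 :: "nat \<Rightarrow> real^'n \<Rightarrow> real^'m1"
    and pi2 :: "nat \<Rightarrow> real^'n \<Rightarrow> real^'m2"
  assumes f_smooth: "\<And>t x u v. (\<lambda>(x, u, v). f t x u v) differentiable (at (x, u, v))"
    and l_smooth: "\<And>t x u v. (\<lambda>(x, u, v). l t x u v) differentiable (at (x, u, v))"
    and lT_smooth: "\<And>x. lT differentiable (at x)"
    and OLNE: "local_OLNE K f l lT (xs 1) a1 b1 a2 b2 u1 u2"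
    and COL_1: "OL_FOC K l lT f a1 b1 xs u1 u2 lam1 nl1 nu1"
    and COL_2: "OL_FOC K (\<lambda>t x u v. - l t x v u) (\<lambda>x. - lT x) (\<lambda>t x u v. f t x v u)
                  a2 b2 xs u2 u1 lam2 nl2 nu2"
    and SC_1: "strict_compl K a1 b1 u1 nl1 nu1"
    and SC_2: "strict_compl K a2 b2 u2 nl2 nu2"
    and pi1_diff: "\<And>t x. pi1 t differentiable (at x)"
    and pi2_diff: "\<And>t x. pi2 t differentiable (at x)"
    and pi1_eq: "\<forall>t\<in>{1..K}. pi1 t (xs t) = u1 t"
    and pi2_eq: "\<forall>t\<in>{1..K}. pi2 t (xs t) = u2 t"
    and PA_1: "policy_assm K pi1 xs u1 a1 b1"
    and PA_2: "policy_assm K pi2 xs u2 a2 b2"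
  shows "\<forall>t\<in>{1..K}.
           FB_FOC K t l lT f a1 b1 pi2 xs u1 u2 lam1 nl1 nu1 (\<lambda>s. nu2 s - nl2 s) \<and>
           FB_FOC K t (\<lambda>t x u v. - l t x v u) (\<lambda>x. - lT x) (\<lambda>t x u v. f t x v u)
                  a2 b2 pi1 xs u2 u1 lam2 nl2 nu2 (\<lambda>s. nu1 s - nl1 s)"
  proof -
  have dfx: "\<And>s x u v. (\<lambda>x. f s x u v) differentiable (at x)" using diff_x[OF f_smooth] .
  have dfu: "\<And>s x u v. (\<lambda>u. f s x u v) differentiable (at u)" using diff_u[OF f_smooth] .
  have dfv: "\<And>s x u v. (\<lambda>v. f s x u v) differentiable (at v)" using diff_v[OF f_smooth] .
  have dlx: "\<And>s x u v. (\<lambda>x. l s x u v) differentiable (at x)" using diff_x[OF l_smooth] .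
  have dlu: "\<And>s x u v. (\<lambda>u. l s x u v) differentiable (at u)" using diff_u[OF l_smooth] .
  have dlv: "\<And>s x u v. (\<lambda>v. l s x u v) differentiable (at v)" using diff_v[OF l_smooth] .
  note C1 = COL_1[unfolded OL_FOC_def]
  note C2 = COL_2[unfolded OL_FOC_def]
  have lamn: "\<forall>n<K. lam2 (K-n) = - lam1 (K-n)"
  proof (intro allI impI)
    fix n assume "n < K" thus "lam2 (K-n) = - lam1 (K-n)"
    proof (induction n)
      case 0
      have "grad (\<lambda>x. - lT x) (xs (K+1)) - lam2 K = 0" using C2 by simp
      moreover have "grad lT (xs (K+1)) - lam1 K = 0" using C1 by simp
      ultimately show ?case using grad_neg[OF lT_smooth] by (simp add: algebra_simps)
    next
      case (Suc n)
      define s where "s = K - n"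
      have s2: "s \<in> {2..K}" using Suc.prems s_def by auto
      have sm: "s - 1 = K - Suc n" using s_def Suc.prems by simp
      have IH: "lam2 s = - lam1 s" using Suc s_def by simp
      have e2: "grad (\<lambda>x. - l s x (u1 s) (u2 s)) (xs s)
                 + jacT (\<lambda>x. f s x (u1 s) (u2 s)) (xs s) (lam2 s) - lam2 (s-1) = 0"
        using C2 s2 by simp
      have e1: "grad (\<lambda>x. l s x (u1 s) (u2 s)) (xs s)
                 + jacT (\<lambda>x. f s x (u1 s) (u2 s)) (xs s) (lam1 s) - lam1 (s-1) = 0"
        using C1 s2 by simp
      let ?G = "grad (\<lambda>x. l s x (u1 s) (u2 s)) (xs s)"
      let ?J = "jacT (\<lambda>x. f s x (u1 s) (u2 s)) (xs s) (lam1 s)"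
      have h1: "lam1 (s-1) = ?G + ?J" using e1 by (metis eq_iff_diff_eq_0)
      have "- ?G + - ?J - lam2 (s-1) = 0" using e2 unfolding IH grad_neg[OF dlx] jacT_neg[OF dfx] .
      hence "lam2 (s-1) = - ?G + - ?J" by (metis eq_iff_diff_eq_0)
      hence "lam2 (s-1) = - lam1 (s-1)" unfolding h1 by simp
      thus ?case using sm by simp
    qed
  qed
  have lam: "\<And>s. s \<in> {1..K} \<Longrightarrow> lam2 s = - lam1 s"
  proof -
    fix s assume "s \<in> {1..K}"
    hence "K - s < K" "K - (K - s) = s" by auto
    thus "lam2 s = - lam1 s" using lamn by metis
  qed
  have pz2: "\<And>s. s \<in> {1..K} \<Longrightarrow> jacT (pi2 s) (xs s) (nu2 s - nl2 s) = 0"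
  proof -
    fix s assume s: "s \<in> {1..K}"
    show "jacT (pi2 s) (xs s) (nu2 s - nl2 s) = 0"
    proof (rule jacT_pol_zero[OF pi2_diff])
      fix j assume "(nu2 s - nl2 s) $ j \<noteq> 0"
      hence "nu2 s $ j \<noteq> 0 \<or> nl2 s $ j \<noteq> 0" by auto
      moreover have "compl_lower (a2 s) (u2 s) (nl2 s)" "compl_upper (b2 s) (u2 s) (nu2 s)"
        using C2 s by auto
      ultimately have "u2 s $ j = a2 s $ j \<or> u2 s $ j = b2 s $ j"
        unfolding compl_lower_def compl_upper_def by (metis eq_iff_diff_eq_0 mult_eq_0_iff)
      thus "\<forall>h. frechet_derivative (pi2 s) (at (xs s)) h $ j = 0"
        using PA_2 s unfolding policy_assm_def by blast
    qed
  qed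
  have pz1: "\<And>s. s \<in> {1..K} \<Longrightarrow> jacT (pi1 s) (xs s) (nu1 s - nl1 s) = 0"
  proof -
    fix s assume s: "s \<in> {1..K}"
    show "jacT (pi1 s) (xs s) (nu1 s - nl1 s) = 0"
    proof (rule jacT_pol_zero[OF pi1_diff])
      fix j assume "(nu1 s - nl1 s) $ j \<noteq> 0"
      hence "nu1 s $ j \<noteq> 0 \<or> nl1 s $ j \<noteq> 0" by auto
      moreover have "compl_lower (a1 s) (u1 s) (nl1 s)" "compl_upper (b1 s) (u1 s) (nu1 s)"
        using C1 s by auto
      ultimately have "u1 s $ j = a1 s $ j \<or> u1 s $ j = b1 s $ j"
        unfolding compl_lower_def compl_upper_def by (metis eq_iff_diff_eq_0 mult_eq_0_iff)
      thus "\<forall>h. frechet_derivative (pi1 s) (at (xs s)) h $ j = 0"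
        using PA_1 s unfolding policy_assm_def by blast
    qed
  qed
  show ?thesis
  proof
    fix t assume t: "t \<in> {1..K}"
    have A1: "\<forall>s\<in>{t+1..K}. grad (\<lambda>v. l s (xs s) (u1 s) v) (u2 s)
                    + jacT (\<lambda>v. f s (xs s) (u1 s) v) (u2 s) (lam1 s) - (nu2 s - nl2 s) = 0"
    proof
      fix s assume s: "s \<in> {t+1..K}"
      hence s1: "s \<in> {1..K}" using t by auto
      have "grad (\<lambda>u. - l s (xs s) (u1 s) u) (u2 s)
                 + jacT (\<lambda>u. f s (xs s) (u1 s) u) (u2 s) (lam2 s) - nl2 s + nu2 s = 0"
        using C2 s1 by simp
      thus "grad (\<lambda>v. l s (xs s) (u1 s) v) (u2 s)
                    + jacT (\<lambda>v. f s (xs s) (u1 s) v) (u2 s) (lam1 s) - (nu2 s - nl2 s) = 0"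
        unfolding lam[OF s1] grad_neg[OF dlv] jacT_neg[OF dfv] by (simp add: algebra_simps)
    qed
    have A2: "\<forall>s\<in>{t+1..K}. grad (\<lambda>v. - l s (xs s) v (u2 s)) (u1 s)
                    + jacT (\<lambda>v. f s (xs s) v (u2 s)) (u1 s) (lam2 s) - (nu1 s - nl1 s) = 0"
    proof
      fix s assume s: "s \<in> {t+1..K}"
      hence s1: "s \<in> {1..K}" using t by auto
      have "grad (\<lambda>u. l s (xs s) u (u2 s)) (u1 s)
                 + jacT (\<lambda>u. f s (xs s) u (u2 s)) (u1 s) (lam1 s) - nl1 s + nu1 s = 0"
        using C1 s1 by simp
      thus "grad (\<lambda>v. - l s (xs s) v (u2 s)) (u1 s)
                    + jacT (\<lambda>v. f s (xs s) v (u2 s)) (u1 s) (lam2 s) - (nu1 s - nl1 s) = 0"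
        unfolding lam[OF s1] grad_neg[OF dlu] jacT_neg[OF dfu] by (simp add: algebra_simps)
    qed
    have B1: "\<forall>s\<in>{t+1..K}. grad (\<lambda>x. l s x (u1 s) (u2 s)) (xs s) - lam1 (s-1)
                    + jacT (\<lambda>x. f s x (u1 s) (u2 s)) (xs s) (lam1 s)
                    + jacT (pi2 s) (xs s) (nu2 s - nl2 s) = 0"
    proof
      fix s assume s: "s \<in> {t+1..K}"
      hence s1: "s \<in> {1..K}" and s2: "s \<in> {2..K}" using t by auto
      show "grad (\<lambda>x. l s x (u1 s) (u2 s)) (xs s) - lam1 (s-1)
                    + jacT (\<lambda>x. f s x (u1 s) (u2 s)) (xs s) (lam1 s)
                    + jacT (pi2 s) (xs s) (nu2 s - nl2 s) = 0"
        using C1 s2 pz2[OF s1] by (simp add: algebra_simps)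
    qed
    have B2: "\<forall>s\<in>{t+1..K}. grad (\<lambda>x. - l s x (u1 s) (u2 s)) (xs s) - lam2 (s-1)
                    + jacT (\<lambda>x. f s x (u1 s) (u2 s)) (xs s) (lam2 s)
                    + jacT (pi1 s) (xs s) (nu1 s - nl1 s) = 0"
    proof
      fix s assume s: "s \<in> {t+1..K}"
      hence s1: "s \<in> {1..K}" and s2: "s \<in> {2..K}" using t by auto
      show "grad (\<lambda>x. - l s x (u1 s) (u2 s)) (xs s) - lam2 (s-1)
                    + jacT (\<lambda>x. f s x (u1 s) (u2 s)) (xs s) (lam2 s)
                    + jacT (pi1 s) (xs s) (nu1 s - nl1 s) = 0"
        using C2 s2 pz1[OF s1] by (simp add: algebra_simps)
    qed
    have sub: "{t..K} \<subseteq> {1..K}" "{t+1..K} \<subseteq> {1..K}" using t by auto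
    show "FB_FOC K t l lT f a1 b1 pi2 xs u1 u2 lam1 nl1 nu1 (\<lambda>s. nu2 s - nl2 s) \<and>
           FB_FOC K t (\<lambda>t x u v. - l t x v u) (\<lambda>x. - lT x) (\<lambda>t x u v. f t x v u)
                  a2 b2 pi1 xs u2 u1 lam2 nl2 nu2 (\<lambda>s. nu1 s - nl1 s)"
      unfolding FB_FOC_def using A1 A2 B1 B2 C1 C2 sub pi1_eq pi2_eq by (auto simp: subset_iff)
  qed
qed

end
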